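(* Let $(\mathbf{X},\mathcal{F},\mu)$ be a probability space with a reflexive symmetric relation $\approx$ such that $D(x)=\{y:y\approx x\}\in\mathcal{F}$ for all $x$ and $\inf_{x\in\mathbf{X}}\mu(D(x))>0$. Let $\Omega=\{\Omega_1,\dots,\Omega_m\}$ be a partition of $\mathbf{X}$ into measurable sets with $\mu(\Omega_i)>0$ such that $x\approx y$ implies $x,y$ lie in the same $\Omega_i$; for $x\in\mathbf{X}$ let $i(x)$ be the index with $x\in\Omega_{i(x)}$, and set $\bar k(\Omega)=\sup_{x\in\mathbf{X}}\mu(\Omega_{i(x)})/\mu(D(x))$. Let $R=\{R_1,\dots,R_m\}$ be a measurable partition of $\mathbf{X}$ with label function $\ell(x)=c$ iff $x\in R_c$, and recall rates $\rho_i=\mu(R_i\cap\Omega_i)/\mu(\Omega_i)$. If $\rho_i\geq\underline\rho$ for all $i$, where $(1-\underline\rho)\,\bar k(\Omega)<1$, then every misclassified input $x$ (i.e. $\ell(x)\neq i(x)$) satisfies $\mu(D(x)\setminus R_{\ell(x)})>0$; in particular there exists $y\approx x$ with $\ell(y)\neq\ell(x)$.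
   Context: A classifier has hyper-sensitive behavior if every misclassified input is an adversarial Doppelgänger, i.e. has some $y\approx x$ with a different label. *)

theory Defs
  imports "HOL-Probability.Probability"
begin

definition dset :: "'a measure \<Rightarrow> ('a \<Rightarrow> 'a \<Rightarrow> bool) \<Rightarrow> 'a \<Rightarrow> 'a set" where
  "dset M rel x = {y \<in> space M. rel y x}"

definition cell_index :: "nat \<Rightarrow> (nat \<Rightarrow> 'a set) \<Rightarrow> 'a \<Rightarrow> nat" where
  "cell_index m P x = (THE i. i \<in> {1..m} \<and> x \<in> P i)"

definition kbar :: "'a measure \<Rightarrow> ('a \<Rightarrow> 'a \<Rightarrow> bool) \<Rightarrow> nat \<Rightarrow> (nat \<Rightarrow> 'a set) \<Rightarrow> real" where
  "kbar M rel m Om =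
     (SUP x\<in>space M. measure M (Om (cell_index m Om x)) / measure M (dset M rel x))"

definition recall :: "'a measure \<Rightarrow> (nat \<Rightarrow> 'a set) \<Rightarrow> (nat \<Rightarrow> 'a set) \<Rightarrow> nat \<Rightarrow> real" where
  "recall M R Om i = measure M (R i \<inter> Om i) / measure M (Om i)"

end

theory Submission
  imports Defs
begin

lemma cell_index_prop:
  assumes disj: "\<And>i j. i \<in> {1..m} \<Longrightarrow> j \<in> {1..m} \<Longrightarrow> i \<noteq> j \<Longrightarrow> P i \<inter> P j = {}"
    and j: "j \<in> {1..m}" "x \<in> P j"
  shows "cell_index m P x = j"
  unfolding cell_index_def
proof (rule the_equality)
  show "j \<in> {1..m} \<and> x \<in> P j" using j by blast
  fix i assume "i \<in> {1..m} \<and> x \<in> P i"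
  then show "i = j" using disj[of i j] j by blast
qed

lemma cell_index_in:
  assumes disj: "\<And>i j. i \<in> {1..m} \<Longrightarrow> j \<in> {1..m} \<Longrightarrow> i \<noteq> j \<Longrightarrow> P i \<inter> P j = {}"
    and cov: "(\<Union>i\<in>{1..m}. P i) = S" and x: "x \<in> S"
  shows "cell_index m P x \<in> {1..m} \<and> x \<in> P (cell_index m P x)"
proof -
  obtain j where "j \<in> {1..m}" "x \<in> P j" using cov x by blast
  moreover have "cell_index m P x = j" by (rule cell_index_prop[OF disj]) (use calculation in auto)
  ultimately show ?thesis by simp
qed

theorem mainTheorem14:
  fixes M :: "'a measure" and rel :: "'a \<Rightarrow> 'a \<Rightarrow> bool"
    and m :: nat and Om R :: "nat \<Rightarrow> 'a set" and rho_low :: real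
  assumes "prob_space M"
    and refl: "\<And>x. x \<in> space M \<Longrightarrow> rel x x"
    and sym: "\<And>x y. rel x y \<Longrightarrow> rel y x"
    and D_meas: "\<And>x. x \<in> space M \<Longrightarrow> dset M rel x \<in> sets M"
    and D_inf: "(INF x\<in>space M. measure M (dset M rel x)) > 0"
    and Om_meas: "\<And>i. i \<in> {1..m} \<Longrightarrow> Om i \<in> sets M"
    and Om_pos: "\<And>i. i \<in> {1..m} \<Longrightarrow> measure M (Om i) > 0"
    and Om_disj: "\<And>i j. i \<in> {1..m} \<Longrightarrow> j \<in> {1..m} \<Longrightarrow> i \<noteq> j \<Longrightarrow> Om i \<inter> Om j = {}"
    and Om_cover: "(\<Union>i\<in>{1..m}. Om i) = space M"
    and Om_compat: "\<And>x y i. x \<in> space M \<Longrightarrow> y \<in> space M \<Longrightarrow> rel x y \<Longrightarrow> i \<in> {1..m} \<Longrightarrow>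
                      (x \<in> Om i \<longleftrightarrow> y \<in> Om i)"
    and R_meas: "\<And>i. i \<in> {1..m} \<Longrightarrow> R i \<in> sets M"
    and R_disj: "\<And>i j. i \<in> {1..m} \<Longrightarrow> j \<in> {1..m} \<Longrightarrow> i \<noteq> j \<Longrightarrow> R i \<inter> R j = {}"
    and R_cover: "(\<Union>i\<in>{1..m}. R i) = space M"
    and rho: "\<And>i. i \<in> {1..m} \<Longrightarrow> recall M R Om i \<ge> rho_low"
    and small: "(1 - rho_low) * kbar M rel m Om < 1"
  shows "\<forall>x\<in>space M. cell_index m R x \<noteq> cell_index m Om x \<longrightarrow>
           measure M (dset M rel x - R (cell_index m R x)) > 0 \<and>
           (\<exists>y\<in>space M. rel y x \<and> cell_index m R y \<noteq> cell_index m R x)"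
proof (intro ballI impI)
  interpret P: prob_space M by fact
  fix x assume x: "x \<in> space M" and mis: "cell_index m R x \<noteq> cell_index m Om x"
  define c where "c = cell_index m R x"
  define i where "i = cell_index m Om x"
  define D where "D = dset M rel x"
  have c: "c \<in> {1..m}" "x \<in> R c" using cell_index_in[OF R_disj R_cover x] c_def by auto
  have i: "i \<in> {1..m}" "x \<in> Om i" using cell_index_in[OF Om_disj Om_cover x] i_def by auto
  have ci: "c \<noteq> i" using mis c_def i_def by simp
  have Dm: "D \<in> sets M" using D_meas x D_def by simp
  have DOm: "D \<subseteq> Om i"
  proof
    fix y assume "y \<in> D"
    then have y: "y \<in> space M" "rel y x" by (auto simp: D_def dset_def)
    then show "y \<in> Om i" using Om_compat[OF y(1) x y(2) i(1)] i(2) by simp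
  qed
  define I where "I = (INF x\<in>space M. measure M (dset M rel x))"
  have bb: "bdd_below ((\<lambda>x. measure M (dset M rel x)) ` space M)"
    by (rule bdd_belowI[of _ 0]) auto
  have DI: "I \<le> measure M D" unfolding I_def D_def by (rule cINF_lower[OF bb x])
  have Ipos: "I > 0" using D_inf I_def by simp
  have Dpos: "measure M D > 0" using DI Ipos by simp
  have ratio_le: "measure M (Om i) / measure M D \<le> kbar M rel m Om"
    unfolding kbar_def D_def
  proof (rule cSUP_upper2[OF _ x])
    show "bdd_above ((\<lambda>x. measure M (Om (cell_index m Om x)) / measure M (dset M rel x)) ` space M)"
    proof (rule bdd_aboveI[of _ "1 / I"])
      fix r assume "r \<in> (\<lambda>x. measure M (Om (cell_index m Om x)) / measure M (dset M rel x)) ` space M"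
      then obtain z where z: "z \<in> space M" and r: "r = measure M (Om (cell_index m Om z)) / measure M (dset M rel z)" by auto
      have "I \<le> measure M (dset M rel z)" unfolding I_def by (rule cINF_lower[OF bb z])
      moreover have "measure M (Om (cell_index m Om z)) \<le> 1" by (rule P.prob_le_1)
      moreover have "measure M (Om (cell_index m Om z)) \<ge> 0" by simp
      ultimately show "r \<le> 1 / I" unfolding r using Ipos
        by (intro frac_le) auto
    qed
  qed (simp add: i_def)
  have sub: "D \<inter> R c \<subseteq> Om i - R i" using DOm R_disj[OF c(1) i(1) ci] by blast
  have mOmR: "measure M (Om i - R i) = measure M (Om i) - measure M (R i \<inter> Om i)"
    using P.finite_measure_Diff'[OF Om_meas[OF i(1)] R_meas[OF i(1)]] by (simp add: Int_commute)
  have rec: "measure M (R i \<inter> Om i) \<ge> rho_low * measure M (Om i)"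
    using rho[OF i(1)] Om_pos[OF i(1)] by (simp add: recall_def pos_le_divide_eq)
  have part1: "measure M (D - R c) > 0"
  proof (rule ccontr)
    assume "\<not> ?thesis"
    then have z: "measure M (D - R c) = 0" using measure_nonneg[of M "D - R c"] by linarith
    have "measure M D = measure M (D \<inter> R c) + measure M (D - R c)"
      using P.finite_measure_Diff'[OF Dm R_meas[OF c(1)]]
        P.finite_measure_mono[of "D \<inter> R c" D] Dm R_meas[OF c(1)] by (simp add: P.finite_measure_Diff')
    also have "\<dots> = measure M (D \<inter> R c)" using z by simp
    also have "\<dots> \<le> measure M (Om i - R i)"
      by (rule P.finite_measure_mono[OF sub]) (use Om_meas[OF i(1)] R_meas[OF i(1)] in auto)
    also have "\<dots> \<le> (1 - rho_low) * measure M (Om i)" using mOmR rec by (simp add: algebra_simps)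
    finally have A: "measure M D \<le> (1 - rho_low) * measure M (Om i)" .
    have pos1: "1 - rho_low > 0"
      using A Dpos Om_pos[OF i(1)] by (smt (verit) mult_nonpos_nonneg)
    have "1 \<le> (1 - rho_low) * (measure M (Om i) / measure M D)"
      using A Dpos by (simp add: field_simps)
    also have "\<dots> \<le> (1 - rho_low) * kbar M rel m Om"
      using ratio_le pos1 by (intro mult_left_mono) auto
    finally show False using small by simp
  qed
  have "D - R c \<noteq> {}" using part1 by (metis less_irrefl measure_empty)
  then obtain y where y: "y \<in> D" "y \<notin> R c" by auto
  then have ys: "y \<in> space M" "rel y x" by (auto simp: D_def dset_def)
  have "cell_index m R y \<noteq> c"
    using cell_index_in[OF R_disj R_cover ys(1)] y(2) by auto
  then show "measure M (dset M rel x - R (cell_index m R x)) > 0 \<and>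
           (\<exists>y\<in>space M. rel y x \<and> cell_index m R y \<noteq> cell_index m R x)"
    using part1 ys unfolding D_def c_def by auto
qed

end
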